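(* Let $q$ be a prime power, $m\ge2$, $\ell\ge1$, $r_1,\dots,r_m\ge1$, $\ell\le k<m\ell$, and $n=\sum_{i=1}^m(\ell+r_i)$. Let $C_1,\dots,C_m\in\mathbb{F}_q^{k\times\ell}$, $D_i\in\mathbb{F}_q^{k\times r_i}$ for $i<m$ and $D_m'\in\mathbb{F}_q^{k\times(r_m-1)}$ be such that the matrix $(C_1\mid D_1\mid\dots\mid C_{m-1}\mid D_{m-1}\mid C_m\mid D_m')$, with blocks $(C_i\mid D_i)$ for $i<m$ and $(C_m\mid D_m')$, generates an $[n-1,k,\ell;r_1,\dots,r_{m-1},r_m-1]$-PMDS code. Let $y_1,\dots,y_\ell$ be variables and let $$G(y)=(C_1\mid D_1\mid\dots\mid C_m\mid D_m'\mid \textstyle\sum_{t=1}^\ell y_tC_m^{(t)})\in\mathbb{F}_q[y_1,\dots,y_\ell]^{k\times n},$$ where $C_m^{(t)}$ is the $t$-th column of $C_m$, with blocks $(C_i\mid D_i)$ for $i<m$ and $(C_m\mid D_m'\mid\sum_t y_tC_m^{(t)})$ as the $m$-th block. Let $\mathcal T_{k,\ell}(G(y))$ be the set of $k\times k$ submatrices of $G(y)$ with at most $\ell$ columns in each block, and $\tilde p(y)=\mathrm{lcm}\{\det S\mid S\in\mathcal T_{k,\ell}(G(y))\}$. Then the total degree of $\tilde p$ is at most $$M^*:=M(k-1;\ell+r_1,\dots,\ell+r_{m-1},\ell+r_m-1;\ell,\dots,\ell,\ell-1).$$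
   Context: For positive integers $n_1,\dots,n_m$ with $n=\sum_i n_i$, nonnegative integers $f_1,\dots,f_m$ and an integer $k\ge0$, set $N_0=0$, $N_i=\sum_{j\le i}n_j$, $J_i=\{N_{i-1}+1,\dots,N_i\}$ for $i=1,\dots,m$, and let $M(k;n_1,\dots,n_m;f_1,\dots,f_m)$ be the number of subsets $I\subseteq\{1,\dots,n\}$ with $|I|=k$ and $|I\cap J_i|\le f_i$ for all $i$. An $[n,k]$-MDS code is a linear code of length $n$, dimension $k$, minimum Hamming distance $n-k+1$. PMDS codes: for integers $\ell\ge1$, $r_1,\dots,r_m\ge0$, $n=\sum_i(r_i+\ell)$, a linear code $C\subseteq\mathbb{F}^n$ of dimension $k<n$ with generator matrix $G=(B_1\mid\dots\mid B_m)$, $B_i\in\mathbb{F}^{k\times(r_i+\ell)}$, is an $[n,k,\ell;r_1,\dots,r_m]$-PMDS code if (i) each row space of $B_i$ is an $[r_i+\ell,\ell]$-MDS code, and (ii) for any choice of $r_i$ erased coordinates in block $i$ for every $i$, puncturing $C$ at them gives an $[m\ell,k]$-MDS code. *)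

theory Defs
  imports "HOL-Library.Poly_Mapping" "HOL-Combinatorics.Permutations"
begin

text \<open>Blocks are numbered 0,...,m-1; block i has length len i; coordinates are 0-based.\<close>

definition blk_start :: "(nat \<Rightarrow> nat) \<Rightarrow> nat \<Rightarrow> nat" where
  "blk_start len i = (\<Sum>j<i. len j)"

definition blk :: "(nat \<Rightarrow> nat) \<Rightarrow> nat \<Rightarrow> nat set" where
  "blk len i = {blk_start len i ..< blk_start len (Suc i)}"

definition Mcount :: "nat \<Rightarrow> nat \<Rightarrow> (nat \<Rightarrow> nat) \<Rightarrow> (nat \<Rightarrow> nat) \<Rightarrow> nat" where
  "Mcount k m len f = card {I. I \<subseteq> {..<blk_start len m} \<and> card I = k \<and>
       (\<forall>i<m. card (I \<inter> blk len i) \<le> f i)}"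

text \<open>Row space of the k-row matrix G (entries G i j), restricted to the coordinate set J
  (coordinates outside J are set to 0; this realises puncturing / taking sub-blocks).\<close>
definition rowsp :: "(nat \<Rightarrow> nat \<Rightarrow> 'a::field) \<Rightarrow> nat \<Rightarrow> nat set \<Rightarrow> (nat \<Rightarrow> 'a) set" where
  "rowsp G k J = {v. \<exists>c. v = (\<lambda>j. if j \<in> J then (\<Sum>i<k. c i * G i j) else 0)}"

definition code_dim :: "(nat \<Rightarrow> 'a::field) set \<Rightarrow> nat \<Rightarrow> bool" where
  "code_dim C d \<longleftrightarrow> (\<exists>b :: nat \<Rightarrow> nat \<Rightarrow> 'a.
      (\<forall>c. (\<forall>j. (\<Sum>i<d. c i * b i j) = 0) \<longrightarrow> (\<forall>i<d. c i = 0)) \<and>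
      C = {v. \<exists>c. v = (\<lambda>j. \<Sum>i<d. c i * b i j)})"

definition hdist :: "nat set \<Rightarrow> (nat \<Rightarrow> 'a) \<Rightarrow> (nat \<Rightarrow> 'a) \<Rightarrow> nat" where
  "hdist J x y = card {j \<in> J. x j \<noteq> y j}"

definition min_dist :: "nat set \<Rightarrow> (nat \<Rightarrow> 'a) set \<Rightarrow> nat" where
  "min_dist J C = Inf {hdist J x y | x y. x \<in> C \<and> y \<in> C \<and> x \<noteq> y}"

definition is_MDS :: "nat set \<Rightarrow> (nat \<Rightarrow> 'a::field) set \<Rightarrow> nat \<Rightarrow> bool" where
  "is_MDS J C d \<longleftrightarrow> code_dim C d \<and> min_dist J C = card J - d + 1"

definition is_PMDS :: "(nat \<Rightarrow> nat \<Rightarrow> 'a::field) \<Rightarrow> nat \<Rightarrow> nat \<Rightarrow> nat \<Rightarrow> (nat \<Rightarrow> nat) \<Rightarrow> bool" where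
  "is_PMDS G k l m r \<longleftrightarrow>
     (let len = (\<lambda>i. r i + l); n = blk_start len m in
       k < n \<and> code_dim (rowsp G k {..<n}) k \<and>
       (\<forall>i<m. is_MDS (blk len i) (rowsp G k (blk len i)) l) \<and>
       (\<forall>E. E \<subseteq> {..<n} \<and> (\<forall>i<m. card (E \<inter> blk len i) = r i) \<longrightarrow>
            is_MDS ({..<n} - E) (rowsp G k ({..<n} - E)) k))"

type_synonym 'a mpoly = "(nat \<Rightarrow>\<^sub>0 nat) \<Rightarrow>\<^sub>0 'a"

definition mp_const :: "'a::zero \<Rightarrow> 'a mpoly" where
  "mp_const c = Poly_Mapping.single 0 c"

definition mp_var :: "nat \<Rightarrow> 'a::{zero,one} mpoly" where
  "mp_var t = Poly_Mapping.single (Poly_Mapping.single t 1) 1"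

definition total_degree :: "'a::zero mpoly \<Rightarrow> nat" where
  "total_degree p = Max (insert 0 ((\<lambda>mn. \<Sum>v\<in>Poly_Mapping.keys mn. Poly_Mapping.lookup mn v) ` Poly_Mapping.keys p))"

definition detk :: "nat \<Rightarrow> (nat \<Rightarrow> nat \<Rightarrow> 'a::comm_ring_1) \<Rightarrow> 'a" where
  "detk k A = (\<Sum>p\<in>{p. p permutes {..<k}}. of_int (sign p) * (\<Prod>i<k. A i (p i)))"

definition is_lcm_of :: "'a::comm_ring_1 set \<Rightarrow> 'a \<Rightarrow> bool" where
  "is_lcm_of P p \<longleftrightarrow> (\<forall>a\<in>P. a dvd p) \<and> (\<forall>q. (\<forall>a\<in>P. a dvd q) \<longrightarrow> p dvd q)"

definition T_dets :: "(nat \<Rightarrow> nat \<Rightarrow> 'a::comm_ring_1) \<Rightarrow> nat \<Rightarrow> nat \<Rightarrow> nat \<Rightarrow> (nat \<Rightarrow> nat) \<Rightarrow> 'a set" where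
  "T_dets A k l m len = {detk k (\<lambda>i j. A i (sorted_list_of_set S ! j)) | S.
       S \<subseteq> {..<blk_start len m} \<and> card S = k \<and> (\<forall>i<m. card (S \<inter> blk len i) \<le> l)}"

end

theory Submission imports Defs begin


definition mdeg :: "(nat \<Rightarrow>\<^sub>0 nat) \<Rightarrow> nat" where
  "mdeg mn = (\<Sum>v\<in>Poly_Mapping.keys mn. Poly_Mapping.lookup mn v)"

lemma mdeg_add: "mdeg (a + b) = mdeg a + mdeg b"
  unfolding mdeg_def by (rule setsum_keys_plus_distrib) auto

lemma td_le_iff: "total_degree (p::'a::zero mpoly) \<le> d \<longleftrightarrow> (\<forall>\<alpha>\<in>Poly_Mapping.keys p. mdeg \<alpha> \<le> d)"
  unfolding total_degree_def mdeg_def by auto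

lemma td_ge: "\<alpha> \<in> Poly_Mapping.keys (p::'a::zero mpoly) \<Longrightarrow> mdeg \<alpha> \<le> total_degree p"
  unfolding total_degree_def mdeg_def by auto

lemma td_mult_le: "total_degree ((p::'a::comm_ring_1 mpoly) * q) \<le> total_degree p + total_degree q"
proof -
  have "\<forall>\<alpha>\<in>Poly_Mapping.keys (p*q). mdeg \<alpha> \<le> total_degree p + total_degree q"
  proof
    fix \<alpha> assume "\<alpha> \<in> Poly_Mapping.keys (p*q)"
    then obtain a b where "\<alpha> = a + b" "a \<in> Poly_Mapping.keys p" "b \<in> Poly_Mapping.keys q"
      using keys_mult by blast
    then show "mdeg \<alpha> \<le> total_degree p + total_degree q"
      using td_ge[of a p] td_ge[of b q] by (simp add: mdeg_add)
  qed
  then show ?thesis by (simp add: td_le_iff)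
qed

lemma td_add_le: "total_degree ((p::'a::comm_ring_1 mpoly) + q) \<le> max (total_degree p) (total_degree q)"
proof -
  have "\<forall>\<alpha>\<in>Poly_Mapping.keys (p+q). mdeg \<alpha> \<le> max (total_degree p) (total_degree q)"
    using keys_add[of p q] td_ge[of _ p] td_ge[of _ q] by fastforce
  then show ?thesis by (simp add: td_le_iff)
qed

lemma td_sum_le: "finite A \<Longrightarrow> (\<And>x. x \<in> A \<Longrightarrow> total_degree (f x :: 'a::comm_ring_1 mpoly) \<le> d)
  \<Longrightarrow> total_degree (sum f A) \<le> d"
proof (induction A rule: finite_induct)
  case empty then show ?case by (simp add: total_degree_def)
next
  case (insert x F)
  then have "total_degree (f x) \<le> d" "total_degree (sum f F) \<le> d" by auto
  then show ?case using td_add_le[of "f x" "sum f F"] insert(1,2) by simp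
qed

lemma td_prod_le: "finite A \<Longrightarrow> total_degree (prod (f::_\<Rightarrow>'a::comm_ring_1 mpoly) A) \<le> (\<Sum>x\<in>A. total_degree (f x))"
proof (induction A rule: finite_induct)
  case empty then show ?case by (simp add: total_degree_def)
next
  case (insert x F)
  then show ?case using td_mult_le[of "f x" "prod f F"] by simp
qed

lemma td_exists:
  assumes "(p::'a::zero mpoly) \<noteq> 0"
  shows "\<exists>\<alpha>\<in>Poly_Mapping.keys p. mdeg \<alpha> = total_degree p"
proof -
  have ne: "Poly_Mapping.keys p \<noteq> {}" using assms by simp
  have "total_degree p \<in> insert 0 (mdeg ` Poly_Mapping.keys p)"
    unfolding total_degree_def mdeg_def by (rule Max_in) auto
  then show ?thesis
  proof
    assume z: "total_degree p = 0"
    from ne obtain \<alpha> where "\<alpha> \<in> Poly_Mapping.keys p" by blast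
    with td_ge[of \<alpha> p] z show ?thesis by force
  qed auto
qed

lemma td_mult_ge:
  fixes p q :: "'a::field mpoly"
  assumes "p \<noteq> 0" "q \<noteq> 0"
  shows "total_degree p + total_degree q \<le> total_degree (p * q)"
proof -
  define dp where "dp = total_degree p"
  define dq where "dq = total_degree q"
  define F where "F = {a \<in> Poly_Mapping.keys p. mdeg a = dp}"
  define G where "G = {a \<in> Poly_Mapping.keys q. mdeg a = dq}"
  have fF: "finite F" "finite G" unfolding F_def G_def by auto
  have neF: "F \<noteq> {}" "G \<noteq> {}" using td_exists[OF assms(1)] td_exists[OF assms(2)]
    unfolding F_def G_def dp_def dq_def by auto
  define a0 where "a0 = Max F"
  define b0 where "b0 = Max G"
  have a0F: "a0 \<in> F" and b0G: "b0 \<in> G" using fF neF unfolding a0_def b0_def by auto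
  have leF: "a \<in> F \<Longrightarrow> a \<le> a0" for a using fF unfolding a0_def by auto
  have leG: "b \<in> G \<Longrightarrow> b \<le> b0" for b using fF unfolding b0_def by auto
  define f where "f = Poly_Mapping.lookup p"
  define g where "g = Poly_Mapping.lookup q"
  have key: "f a * g b \<noteq> 0 \<Longrightarrow> a0 + b0 = a + b \<Longrightarrow> a = a0 \<and> b = b0" for a b
  proof -
    assume h: "f a * g b \<noteq> 0" "a0 + b0 = a + b"
    then have ka: "a \<in> Poly_Mapping.keys p" and kb: "b \<in> Poly_Mapping.keys q"
      unfolding f_def g_def by (auto simp: in_keys_iff)
    have "mdeg a \<le> dp" "mdeg b \<le> dq" using td_ge[OF ka] td_ge[OF kb] dp_def dq_def by auto
    moreover have "mdeg a + mdeg b = dp + dq"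
      using h(2) a0F b0G unfolding F_def G_def by (metis (mono_tags, lifting) mdeg_add mem_Collect_eq)
    ultimately have "a \<in> F" "b \<in> G" using ka kb unfolding F_def G_def by auto
    then have "a \<le> a0" "b \<le> b0" using leF leG by auto
    show ?thesis
    proof (rule ccontr)
      assume "\<not> (a = a0 \<and> b = b0)"
      then have "a < a0 \<or> b < b0" using \<open>a \<le> a0\<close> \<open>b \<le> b0\<close> by auto
      then have "a + b < a0 + b0"
        using \<open>a \<le> a0\<close> \<open>b \<le> b0\<close> add_less_le_mono add_le_less_mono by blast
      with h(2) show False by simp
    qed
  qed
  have "Poly_Mapping.lookup (p * q) (a0 + b0) = prod_fun f g (a0 + b0)"
    unfolding f_def g_def by transfer simp
  also have "\<dots> = (\<Sum>(a, b). f a * g b when a0 + b0 = a + b)"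
    by (rule prod_fun_unfold_prod) (auto simp: f_def g_def)
  also have "\<dots> = (\<Sum>(a, b). f a * g b when (a0, b0) = (a, b))"
  proof (rule Sum_any.cong)
    fix ab :: "(nat \<Rightarrow>\<^sub>0 nat) \<times> (nat \<Rightarrow>\<^sub>0 nat)"
    obtain a b where ab: "ab = (a, b)" by (cases ab)
    show "(case ab of (a, b) \<Rightarrow> f a * g b when a0 + b0 = a + b) =
      (case ab of (a, b) \<Rightarrow> f a * g b when (a0, b0) = (a, b))"
    proof (cases "f a * g b = 0")
      case True then show ?thesis using ab by (simp add: when_def)
    next
      case False then show ?thesis using ab key[of a b] by (auto simp: when_def)
    qed
  qed
  also have "\<dots> = (\<Sum>ab. (case ab of (a, b) \<Rightarrow> f a * g b) when (a0, b0) = ab)"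
    unfolding split_def when_def by auto
  also have "\<dots> = f a0 * g b0" by simp
  also have "\<dots> \<noteq> 0" using a0F b0G unfolding F_def G_def f_def g_def by (auto simp: in_keys_iff)
  finally have "a0 + b0 \<in> Poly_Mapping.keys (p * q)" by (simp add: in_keys_iff)
  from td_ge[OF this] show ?thesis
    using a0F b0G unfolding F_def G_def dp_def dq_def by (simp add: mdeg_add)
qed

lemma td_dvd:
  fixes p Q :: "'a::field mpoly"
  assumes "p dvd Q" "Q \<noteq> 0"
  shows "total_degree p \<le> total_degree Q"
proof -
  obtain c where c: "Q = p * c" using assms(1) by blast
  then have "p \<noteq> 0" "c \<noteq> 0" using assms(2) by auto
  from td_mult_ge[OF this] c show ?thesis by simp
qed



lemma td_const: "total_degree (mp_const c :: 'a::comm_ring_1 mpoly) = 0"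
proof -
  have "\<forall>\<alpha>\<in>Poly_Mapping.keys (mp_const c :: 'a mpoly). mdeg \<alpha> \<le> 0"
    by (auto simp: mp_const_def mdeg_def split: if_splits)
  then show ?thesis using td_le_iff by blast
qed

lemma td_var: "total_degree (mp_var t :: 'a::comm_ring_1 mpoly) \<le> 1"
proof -
  have "\<forall>\<alpha>\<in>Poly_Mapping.keys (mp_var t :: 'a mpoly). mdeg \<alpha> \<le> 1"
    by (auto simp: mp_var_def mdeg_def)
  then show ?thesis using td_le_iff by blast
qed

lemma td_of_int: "total_degree (of_int c :: 'a::comm_ring_1 mpoly) = 0"
  using td_const[of "of_int c :: 'a"] by (simp add: mp_const_def)

lemma card_hits_le1:
  assumes "inj_on h A" "finite A"
  shows "card {i\<in>A. h i = x} \<le> 1"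
proof -
  have "card {i\<in>A. h i = x} = card (h ` {i\<in>A. h i = x})"
    using assms by (intro card_image[symmetric]) (auto intro: inj_on_subset)
  also have "\<dots> \<le> card {x}" by (rule card_mono) auto
  finally show ?thesis by simp
qed

lemma det_deg:
  fixes A :: "nat \<Rightarrow> nat \<Rightarrow> 'a::comm_ring_1 mpoly"
  assumes fin: "finite S" and cS: "card S = k"
    and ent: "\<And>i j. j \<in> S \<Longrightarrow> total_degree (A i j) \<le> (if j = n0 then 1 else 0)"
  shows "total_degree (detk k (\<lambda>i j. A i (sorted_list_of_set S ! j))) \<le> (if n0 \<in> S then 1 else 0)"
  unfolding detk_def
proof (rule td_sum_le)
  show "finite {p. p permutes {..<k}}" by (simp add: finite_permutations)
  fix p assume "p \<in> {p. p permutes {..<k}}"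
  then have pp: "p permutes {..<k}" by simp
  define cs where "cs = sorted_list_of_set S"
  have lcs: "length cs = k" "distinct cs" "set cs = S" using fin cS by (simp_all add: cs_def)
  have pk: "i < k \<Longrightarrow> p i < k" for i using permutes_in_image[OF pp] by simp
  have inS: "i < k \<Longrightarrow> cs ! (p i) \<in> S" for i
  proof -
    assume "i < k" then have "p i < length cs" using pk lcs(1) by simp
    then show ?thesis using lcs(3) nth_mem by blast
  qed
  have inj: "inj_on (\<lambda>i. cs ! (p i)) {..<k}"
  proof
    fix i j assume "i \<in> {..<k}" "j \<in> {..<k}" "cs ! p i = cs ! p j"
    moreover have "p i < length cs" "p j < length cs" using pk lcs(1) \<open>i \<in> {..<k}\<close> \<open>j \<in> {..<k}\<close> by auto
    ultimately have "p i = p j" using lcs(2) nth_eq_iff_index_eq by blast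
    then show "i = j" using permutes_inj[OF pp] by (simp add: inj_eq)
  qed
  have "total_degree (\<Prod>i<k. A i (cs ! p i)) \<le> (\<Sum>i<k. total_degree (A i (cs ! p i)))"
    by (rule td_prod_le) simp
  also have "\<dots> \<le> (\<Sum>i<k. (if cs ! p i = n0 then 1 else 0))"
    by (rule sum_mono) (simp add: ent inS)
  also have "\<dots> = card {i\<in>{..<k}. cs ! p i = n0}"
    by (simp add: sum.If_cases) (rule arg_cong[where f=card], auto)
  also have "\<dots> \<le> (if n0 \<in> S then 1 else 0)"
  proof (cases "n0 \<in> S")
    case True then show ?thesis using card_hits_le1[OF inj] by simp
  next
    case False then have E: "{i\<in>{..<k}. cs ! p i = n0} = {}" using inS by auto
    show ?thesis unfolding E using False by simp
  qed
  finally have Y: "total_degree (\<Prod>i<k. A i (cs ! p i)) \<le> (if n0 \<in> S then 1 else 0)" .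
  have X: "total_degree (of_int (sign p) * (\<Prod>i<k. A i (cs ! p i))) \<le> total_degree (\<Prod>i<k. A i (cs ! p i))"
    using td_mult_le[of "of_int (sign p)" "\<Prod>i<k. A i (cs ! p i)"] td_of_int[where 'a='a and c="sign p"]
    by linarith
  show "total_degree (of_int (sign p) * (\<Prod>i<k. A i (sorted_list_of_set S ! p i)))
       \<le> (if n0 \<in> S then 1 else 0)"
    unfolding cs_def[symmetric] by (rule order_trans[OF X Y])
qed

lemma blk_start_mono: "i \<le> j \<Longrightarrow> blk_start len i \<le> blk_start len j"
  unfolding blk_start_def by (rule sum_mono2) auto

lemma blk_start_Suc: "blk_start len (Suc i) = blk_start len i + len i"
  unfolding blk_start_def by simp

lemma count_le:
  fixes l m k :: nat and r :: "nat \<Rightarrow> nat"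
  assumes m: "m \<ge> 1" and l: "l \<ge> 1"
  defines "len \<equiv> (\<lambda>i. l + r i)"
  defines "len' \<equiv> (\<lambda>i. if i = m - 1 then l + r i - 1 else l + r i)"
  defines "N \<equiv> blk_start len m"
  shows "card {S. (S \<subseteq> {..<N} \<and> card S = k \<and> (\<forall>i<m. card (S \<inter> blk len i) \<le> l)) \<and> N - 1 \<in> S}
     \<le> Mcount (k - 1) m len' (\<lambda>i. if i = m - 1 then l - 1 else l)"
proof -
  define m1 where "m1 = m - 1"
  have mm: "m = Suc m1" using m m1_def by simp
  have bs: "i \<le> m1 \<Longrightarrow> blk_start len' i = blk_start len i" for i
    unfolding blk_start_def len'_def len_def m1_def by (rule sum.cong) auto
  have N: "N = blk_start len m1 + len m1" unfolding N_def mm by (simp add: blk_start_Suc)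
  have N': "blk_start len' m = N - 1" using bs[of m1] l
    unfolding mm blk_start_Suc N by (simp add: len'_def len_def m1_def)
  have lenpos: "len m1 \<ge> 1" using l len_def by simp
  define n0 where "n0 = N - 1"
  have n0b: "n0 \<in> blk len m1" using lenpos N unfolding blk_def n0_def mm blk_start_Suc by auto
  have blk_lt: "i < m1 \<Longrightarrow> blk len' i = blk len i" for i
    unfolding blk_def using bs[of i] bs[of "Suc i"] by simp
  have n0nb: "i < m1 \<Longrightarrow> n0 \<notin> blk len i" for i
    using blk_start_mono[of "Suc i" m1 len] lenpos N unfolding blk_def n0_def by auto
  have blk_last: "blk len' m1 = blk len m1 - {n0}"
    unfolding blk_def using bs[of m1] N' N lenpos unfolding mm n0_def by (auto simp: blk_start_Suc)
  let ?A = "{S. (S \<subseteq> {..<N} \<and> card S = k \<and> (\<forall>i<m. card (S \<inter> blk len i) \<le> l)) \<and> N - 1 \<in> S}"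
  let ?B = "{I. I \<subseteq> {..<blk_start len' m} \<and> card I = k - 1 \<and>
       (\<forall>i<m. card (I \<inter> blk len' i) \<le> (\<lambda>i. if i = m - 1 then l - 1 else l) i)}"
  have "card ?A \<le> card ?B"
  proof (rule card_inj_on_le)
    show "inj_on (\<lambda>S. S - {n0}) ?A"
    proof
      fix S T assume "S \<in> ?A" "T \<in> ?A" "S - {n0} = T - {n0}"
      then show "S = T" unfolding n0_def by blast
    qed
    show "finite ?B" by (rule finite_subset[of _ "Pow {..<blk_start len' m}"]) auto
    show "(\<lambda>S. S - {n0}) ` ?A \<subseteq> ?B"
    proof
      fix I assume "I \<in> (\<lambda>S. S - {n0}) ` ?A"
      then obtain S where S: "S \<in> ?A" and I: "I = S - {n0}" by blast
      have fS: "finite S" using S finite_subset[of S "{..<N}"] by auto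
      have "I \<subseteq> {..<blk_start len' m}" using S I N' unfolding n0_def by auto
      moreover have "card I = k - 1" using S I fS unfolding n0_def by simp
      moreover have "card (I \<inter> blk len' i) \<le> (if i = m - 1 then l - 1 else l)" if "i < m" for i
      proof (cases "i = m1")
        case True
        have "I \<inter> blk len' i = (S \<inter> blk len m1) - {n0}" using True I blk_last by auto
        moreover have "n0 \<in> S \<inter> blk len m1" using S n0b unfolding n0_def by auto
        ultimately have "card (I \<inter> blk len' i) = card (S \<inter> blk len m1) - 1"
          using fS by simp
        moreover have "card (S \<inter> blk len m1) \<le> l" using S mm by auto
        ultimately show ?thesis using True m1_def by simp
      next
        case False
        then have "i < m1" using that mm by simp
        then have "I \<inter> blk len' i = S \<inter> blk len i" using I blk_lt n0nb by auto
        then show ?thesis using S that False m1_def by auto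
      qed
      ultimately show "I \<in> ?B" by auto
    qed
  qed
  then show ?thesis unfolding Mcount_def by simp
qed

theorem proposition23:
  fixes G' :: "nat \<Rightarrow> nat \<Rightarrow> 'a::{field,finite}"
    and m l k :: nat and r :: "nat \<Rightarrow> nat"
  assumes "m \<ge> 2" and "l \<ge> 1" and "\<forall>i<m. r i \<ge> 1"
    and "l \<le> k" and "k < m * l"
    and "is_PMDS G' k l m (r(m - 1 := r (m - 1) - 1))"
  shows "\<forall>p. is_lcm_of
            (T_dets (\<lambda>i j. if j < blk_start (\<lambda>i. l + r i) m - 1 then mp_const (G' i j)
                          else (\<Sum>t<l. mp_var t * mp_const (G' i (blk_start (\<lambda>i. l + r i) (m - 1) + t))))
                    k l m (\<lambda>i. l + r i)) p
          \<longrightarrow> total_degree p \<le>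
              Mcount (k - 1) m (\<lambda>i. if i = m - 1 then l + r i - 1 else l + r i)
                     (\<lambda>i. if i = m - 1 then l - 1 else l)"
proof (intro allI impI)
  fix p
  define len where "len = (\<lambda>i. l + r i)"
  define N where "N = blk_start len m"
  define A where "A = (\<lambda>i j. if j < N - 1 then mp_const (G' i j)
                          else (\<Sum>t<l. mp_var t * mp_const (G' i (blk_start len (m - 1) + t))) :: 'a mpoly)"
  define Ss where "Ss = {S. S \<subseteq> {..<N} \<and> card S = k \<and> (\<forall>i<m. card (S \<inter> blk len i) \<le> l)}"
  define dt where "dt = (\<lambda>S. detk k (\<lambda>i j. A i (sorted_list_of_set S ! j)))"
  define T where "T = dt ` Ss"
  assume "is_lcm_of (T_dets (\<lambda>i j. if j < blk_start (\<lambda>i. l + r i) m - 1 then mp_const (G' i j)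
                          else (\<Sum>t<l. mp_var t * mp_const (G' i (blk_start (\<lambda>i. l + r i) (m - 1) + t))))
                    k l m (\<lambda>i. l + r i)) p"
  moreover have "T_dets (\<lambda>i j. if j < blk_start (\<lambda>i. l + r i) m - 1 then mp_const (G' i j)
                          else (\<Sum>t<l. mp_var t * mp_const (G' i (blk_start (\<lambda>i. l + r i) (m - 1) + t))))
                    k l m (\<lambda>i. l + r i) = T"
    unfolding T_dets_def T_def dt_def Ss_def A_def N_def len_def by blast
  ultimately have lcm: "is_lcm_of T p" by simp
  have finSs: "finite Ss" unfolding Ss_def by (rule finite_subset[of _ "Pow {..<N}"]) auto
  have finT: "finite T" unfolding T_def using finSs by simp
  have entdeg: "total_degree (A i j) \<le> (if j = N - 1 then 1 else 0)" if "j < N" for i j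
  proof (cases "j < N - 1")
    case True then show ?thesis by (simp add: A_def td_const)
  next
    case False
    then have j: "j = N - 1" using that by simp
    have "total_degree (\<Sum>t<l. mp_var t * mp_const (G' i (blk_start len (m - 1) + t)) :: 'a mpoly) \<le> 1"
    proof (rule td_sum_le)
      fix t
      show "total_degree (mp_var t * mp_const (G' i (blk_start len (m - 1) + t)) :: 'a mpoly) \<le> 1"
        using td_mult_le[of "mp_var t :: 'a mpoly" "mp_const (G' i (blk_start len (m - 1) + t))"]
          td_var[where 'a='a and t=t] td_const[of "G' i (blk_start len (m - 1) + t)"] by linarith
    qed simp
    then show ?thesis using j by (simp add: A_def)
  qed
  have dtdeg: "total_degree (dt S) \<le> (if N - 1 \<in> S then 1 else 0)" if "S \<in> Ss" for S
    unfolding dt_def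
  proof (rule det_deg)
    show fS: "finite S" using that finite_subset[of S "{..<N}"] unfolding Ss_def by auto
    show "card S = k" using that unfolding Ss_def by auto
    fix i j assume "j \<in> S"
    then have "j < N" using that unfolding Ss_def by auto
    then show "total_degree (A i j) \<le> (if j = N - 1 then 1 else 0)" by (rule entdeg)
  qed
  show "total_degree p \<le> Mcount (k - 1) m (\<lambda>i. if i = m - 1 then l + r i - 1 else l + r i)
                     (\<lambda>i. if i = m - 1 then l - 1 else l)"
  proof (cases "0 \<in> T")
    case True
    then have "p = 0" using lcm unfolding is_lcm_of_def by auto
    then show ?thesis by (simp add: total_degree_def)
  next
    case False
    define Q where "Q = prod (\<lambda>a. a) T"
    have Q0: "Q \<noteq> 0" unfolding Q_def using False finT by simp
    have "\<forall>a\<in>T. a dvd Q" unfolding Q_def using finT by (auto intro: dvd_prodI)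
    then have "p dvd Q" using lcm unfolding is_lcm_of_def by blast
    then have "total_degree p \<le> total_degree Q" using Q0 by (rule td_dvd)
    also have "\<dots> \<le> (\<Sum>a\<in>T. total_degree a)" unfolding Q_def using finT by (rule td_prod_le)
    also have "\<dots> \<le> (\<Sum>S\<in>Ss. total_degree (dt S))" unfolding T_def
      using sum_image_le[OF finSs, of "\<lambda>a. total_degree a" dt] by (simp add: comp_def)
    also have "\<dots> \<le> (\<Sum>S\<in>Ss. (if N - 1 \<in> S then 1 else 0))"
      by (rule sum_mono) (rule dtdeg)
    also have "\<dots> = card {S \<in> Ss. N - 1 \<in> S}"
      using finSs by (simp add: sum.If_cases) (rule arg_cong[where f=card], auto)
    also have "\<dots> = card {S. (S \<subseteq> {..<N} \<and> card S = k \<and> (\<forall>i<m. card (S \<inter> blk len i) \<le> l)) \<and> N - 1 \<in> S}"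
      unfolding Ss_def by simp
    also have "\<dots> \<le> Mcount (k - 1) m (\<lambda>i. if i = m - 1 then l + r i - 1 else l + r i)
                     (\<lambda>i. if i = m - 1 then l - 1 else l)"
      unfolding N_def len_def by (rule count_le) (use assms in auto)
    finally show ?thesis .
  qed
qed

end
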